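(* (i) For every abstract storage device $D$, $C(D)=\max_{\pi\in\mathcal{P}_D}\log|\pi|$. (ii) For all ASDs $D,D'$, $C(D\times D')=C(D)+C(D')$. (iii) For every ASD $D$ and every integer $k\ge1$, $C(D^{(k)})\le k\cdot C(D)$.
   Context: An abstract storage device (ASD) is a pair $D=(\mathcal{S}_D,\mathcal{P}_D)$, $\mathcal{S}_D$ a finite set and $\mathcal{P}_D$ a finite family of partitions of $\mathcal{S}_D$; $|\pi|$ is the number of blocks. For a partition $\pi$ of $\mathcal{S}'$ and $\phi:\mathcal{S}\to\mathcal{S}'$, $\pi\circ\phi$ is the partition of $\mathcal{S}$ with $x,y$ in the same block iff $\phi(x),\phi(y)$ are in the same block of $\pi$; $\pi\preceq\rho$ means every block of $\pi$ lies in a block of $\rho$; $\wedge$ is the meet of partitions. $D\le D'$ means there exist $\phi:\mathcal{S}_D\to\mathcal{S}_{D'}$, $\alpha:\mathcal{P}_D\to\mathcal{P}_{D'}$ with $\alpha(\pi)\circ\phi\preceq\pi$ for all $\pi\in\mathcal{P}_D$. $C_m$ is the ASD with state space $\{1,\dots,m\}$ and partition set $\{\{\{1\},\dots,\{m\}\}\}$. The storage capacity is $C(D)=\max\{\log m: m\in\mathbb{N}, C_m\le D\}$ (log base 2). The direct product $D\times D'$ has state space $\mathcal{S}_D\times\mathcal{S}_{D'}$ and partition set $\{\pi\times\pi'\}$ with $\pi\times\pi'=\{B\times B':B\in\pi,B'\in\pi'\}$. $D^{(k)}$ has state space $\mathcal{S}_D$ and partition set $\{\pi_1\wedge\cdots\wedge\pi_k:\pi_i\in\mathcal{P}_D\}$.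 *)

theory Defs
  imports "HOL-Analysis.Analysis" "HOL-Library.Disjoint_Sets"
begin

definition asd :: "'a set \<Rightarrow> 'a set set set \<Rightarrow> bool" where
  "asd S P \<longleftrightarrow> finite S \<and> finite P \<and> (\<forall>\<pi>\<in>P. partition_on S \<pi>)"

definition same_block :: "'a set set \<Rightarrow> 'a \<Rightarrow> 'a \<Rightarrow> bool" where
  "same_block \<pi> x y \<longleftrightarrow> (\<exists>B\<in>\<pi>. x \<in> B \<and> y \<in> B)"

definition part_comp :: "'b set set \<Rightarrow> ('a \<Rightarrow> 'b) \<Rightarrow> 'a set \<Rightarrow> 'a set set" where
  "part_comp \<pi> \<phi> S = (\<lambda>x. {y \<in> S. same_block \<pi> (\<phi> x) (\<phi> y)}) ` S"

definition refines :: "'a set set \<Rightarrow> 'a set set \<Rightarrow> bool" where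
  "refines \<pi> \<rho> \<longleftrightarrow> (\<forall>B\<in>\<pi>. \<exists>B'\<in>\<rho>. B \<subseteq> B')"

definition asd_le :: "'a set \<Rightarrow> 'a set set set \<Rightarrow> 'b set \<Rightarrow> 'b set set set \<Rightarrow> bool" where
  "asd_le S P S' P' \<longleftrightarrow> (\<exists>\<phi> \<alpha>. \<phi> \<in> S \<rightarrow> S' \<and> \<alpha> \<in> P \<rightarrow> P' \<and>
      (\<forall>\<pi>\<in>P. refines (part_comp (\<alpha> \<pi>) \<phi> S) \<pi>))"

definition cm_states :: "nat \<Rightarrow> nat set" where
  "cm_states m = {1..m}"

definition cm_parts :: "nat \<Rightarrow> nat set set set" where
  "cm_parts m = {(\<lambda>i. {i}) ` {1..m}}"

definition capacity :: "'a set \<Rightarrow> 'a set set set \<Rightarrow> real" where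
  "capacity S P = Max ((\<lambda>m. log 2 (real m)) ` {m. m \<ge> 1 \<and> asd_le (cm_states m) (cm_parts m) S P})"

definition prod_part :: "'a set set \<Rightarrow> 'b set set \<Rightarrow> ('a \<times> 'b) set set" where
  "prod_part \<pi> \<pi>' = {B \<times> B' | B B'. B \<in> \<pi> \<and> B' \<in> \<pi>'}"

definition prod_parts :: "'a set set set \<Rightarrow> 'b set set set \<Rightarrow> ('a \<times> 'b) set set set" where
  "prod_parts P P' = {prod_part \<pi> \<pi>' | \<pi> \<pi>'. \<pi> \<in> P \<and> \<pi>' \<in> P'}"

definition meet :: "'a set set \<Rightarrow> 'a set set \<Rightarrow> 'a set set" where
  "meet \<pi> \<rho> = {A \<inter> B | A B. A \<in> \<pi> \<and> B \<in> \<rho> \<and> A \<inter> B \<noteq> {}}"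

fun meet_list :: "'a set set list \<Rightarrow> 'a set set" where
  "meet_list [] = {}"
| "meet_list [\<pi>] = \<pi>"
| "meet_list (\<pi> # \<pi>s) = meet \<pi> (meet_list \<pi>s)"

definition pow_parts :: "'a set set set \<Rightarrow> nat \<Rightarrow> 'a set set set" where
  "pow_parts P k = {meet_list \<pi>s | \<pi>s. length \<pi>s = k \<and> set \<pi>s \<subseteq> P}"

end

theory Submission imports Defs begin

lemma M_sub:
  assumes cov: "\<And>\<pi>. \<pi> \<in> P \<Longrightarrow> finite \<pi> \<and> S \<subseteq> \<Union>\<pi>"
    and le: "asd_le (cm_states m) (cm_parts m) S P"
  shows "\<exists>\<pi>\<in>P. m \<le> card \<pi>"
proof -
  obtain \<phi> \<alpha> where phi: "\<phi> \<in> {1..m} \<rightarrow> S" and al: "\<alpha> \<in> cm_parts m \<rightarrow> P"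
    and rf: "\<forall>\<pi>\<in>cm_parts m. refines (part_comp (\<alpha> \<pi>) \<phi> {1..m}) \<pi>"
    using le unfolding asd_le_def cm_states_def by blast
  define \<pi>0 where "\<pi>0 = (\<lambda>i. {i}) ` {1..m}"
  have p0: "\<pi>0 \<in> cm_parts m" by (simp add: cm_parts_def \<pi>0_def)
  define \<pi> where "\<pi> = \<alpha> \<pi>0"
  have pP: "\<pi> \<in> P" using al p0 \<pi>_def by blast
  have r: "refines (part_comp \<pi> \<phi> {1..m}) \<pi>0" using rf p0 \<pi>_def by blast
  have sb: "same_block \<pi> (\<phi> i) (\<phi> i)" if "i \<in> {1..m}" for i
    using cov[OF pP] phi that unfolding same_block_def by blast
  have inj: "j = i" if "i \<in> {1..m}" "j \<in> {1..m}" "same_block \<pi> (\<phi> i) (\<phi> j)" for i j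
  proof -
    let ?b = "{y \<in> {1..m}. same_block \<pi> (\<phi> i) (\<phi> y)}"
    have "?b \<in> part_comp \<pi> \<phi> {1..m}" using that(1) unfolding part_comp_def by blast
    then obtain i' where "?b \<subseteq> {i'}" using r unfolding refines_def \<pi>0_def by blast
    moreover have "i \<in> ?b" "j \<in> ?b" using that sb by auto
    ultimately show ?thesis by blast
  qed
  define g where "g i = (SOME B. B \<in> \<pi> \<and> \<phi> i \<in> B)" for i
  have g: "g i \<in> \<pi> \<and> \<phi> i \<in> g i" if "i \<in> {1..m}" for i
  proof -
    have "\<exists>B. B \<in> \<pi> \<and> \<phi> i \<in> B" using sb[OF that] unfolding same_block_def by blast
    then show ?thesis unfolding g_def by (rule someI_ex)
  qed
  have "inj_on g {1..m}"
  proof (rule inj_onI)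
    fix i j assume "i \<in> {1..m}" "j \<in> {1..m}" "g i = g j"
    then show "i = j" using inj[of i j] g[of i] g[of j] unfolding same_block_def by metis
  qed
  moreover have "g ` {1..m} \<subseteq> \<pi>" using g by blast
  ultimately have "card {1..m} \<le> card \<pi>" using cov[OF pP] card_inj_on_le by blast
  then show ?thesis using pP by auto
qed

lemma M_sup:
  assumes pP: "\<pi> \<in> P" and pa: "partition_on S \<pi>" and fin: "finite \<pi>" and m: "m \<le> card \<pi>"
  shows "asd_le (cm_states m) (cm_parts m) S P"
proof -
  obtain h where h: "bij_betw h {1..card \<pi>} \<pi>" using ex_bij_betw_nat_finite_1[OF fin] by blast
  have ne: "{} \<notin> \<pi>" using pa partition_onD3 by blast
  have un: "S = \<Union>\<pi>" using pa partition_onD1 by blast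
  have dj: "disjoint \<pi>" using pa partition_onD2 by blast
  define \<phi> where "\<phi> i = (SOME x. x \<in> h i)" for i
  have hi: "h i \<in> \<pi>" if "i \<in> {1..m}" for i using h m that bij_betwE by fastforce
  have phi: "\<phi> i \<in> h i" if "i \<in> {1..m}" for i
    unfolding \<phi>_def using hi[OF that] ne by (metis all_not_in_conv someI_ex)
  have ij: "i = j" if asm: "i \<in> {1..m}" "j \<in> {1..m}" "same_block \<pi> (\<phi> i) (\<phi> j)" for i j
  proof -
    obtain C where C: "C \<in> \<pi>" "\<phi> i \<in> C" "\<phi> j \<in> C" using asm(3) same_block_def by metis
    have hiC: "h i = C"
    proof (rule ccontr)
      assume "h i \<noteq> C"
      then have "h i \<inter> C = {}" using disjointD[OF dj hi[OF asm(1)] C(1)] by blast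
      then show False using phi[OF asm(1)] C by blast
    qed
    have hjC: "h j = C"
    proof (rule ccontr)
      assume "h j \<noteq> C"
      then have "h j \<inter> C = {}" using disjointD[OF dj hi[OF asm(2)] C(1)] by blast
      then show False using phi[OF asm(2)] C by blast
    qed
    have ih: "inj_on h {1..card \<pi>}" using h by (simp add: bij_betw_def)
    have "i \<in> {1..card \<pi>}" "j \<in> {1..card \<pi>}" using asm(1,2) m by auto
    then show ?thesis using inj_onD[OF ih, of i j] hiC hjC by simp
  qed
  show ?thesis unfolding asd_le_def cm_states_def
  proof (intro exI[of _ \<phi>] exI[of _ "\<lambda>_. \<pi>"] conjI)
    show "\<phi> \<in> {1..m} \<rightarrow> S" using phi hi un by blast
    show "(\<lambda>_. \<pi>) \<in> cm_parts m \<rightarrow> P" using pP by blast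
    show "\<forall>\<rho>\<in>cm_parts m. refines (part_comp \<pi> \<phi> {1..m}) \<rho>"
    proof
      fix \<rho> assume "\<rho> \<in> cm_parts m"
      then have rho: "\<rho> = (\<lambda>i. {i}) ` {1..m}" by (simp add: cm_parts_def)
      show "refines (part_comp \<pi> \<phi> {1..m}) \<rho>" unfolding refines_def
      proof
        fix B assume "B \<in> part_comp \<pi> \<phi> {1..m}"
        then obtain i where i: "i \<in> {1..m}" and B: "B = {y \<in> {1..m}. same_block \<pi> (\<phi> i) (\<phi> y)}"
          unfolding part_comp_def by blast
        have "B \<subseteq> {i}" using ij i B by blast
        moreover have "{i} \<in> \<rho>" using rho i by blast
        ultimately show "\<exists>B'\<in>\<rho>. B \<subseteq> B'" by blast
      qed
    qed
  qed
qed


lemma cap_gen: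
  assumes S: "S \<noteq> {}" and fP: "finite P" and P: "P \<noteq> {}"
    and pa: "\<And>\<pi>. \<pi> \<in> P \<Longrightarrow> partition_on S \<pi> \<and> finite \<pi>"
  shows "capacity S P = log 2 (real (Max (card ` P)))"
    and "Max ((\<lambda>\<pi>. log 2 (real (card \<pi>))) ` P) = log 2 (real (Max (card ` P)))"
    and "1 \<le> Max (card ` P)"
proof -
  define N where "N = Max (card ` P)"
  have "N \<in> card ` P" unfolding N_def by (rule Max_in) (use fP P in auto)
  then obtain \<pi>0 where p0: "\<pi>0 \<in> P" "card \<pi>0 = N" by auto
  have ge: "card \<pi> \<le> N" if "\<pi> \<in> P" for \<pi> using fP that N_def by simp
  have c1: "1 \<le> card \<pi>" if "\<pi> \<in> P" for \<pi>
  proof -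
    have "\<Union>\<pi> = S" using pa[OF that] partition_onD1 by blast
    then have "\<pi> \<noteq> {}" using S by auto
    then show ?thesis using pa[OF that] by (simp add: Suc_le_eq card_gt_0_iff)
  qed
  have N1: "1 \<le> N" using c1 p0 by auto
  then show "1 \<le> Max (card ` P)" using N_def by simp
  have M: "{m. m \<ge> 1 \<and> asd_le (cm_states m) (cm_parts m) S P} = {1..N}"
  proof (intro equalityI subsetI)
    fix m assume "m \<in> {m. m \<ge> 1 \<and> asd_le (cm_states m) (cm_parts m) S P}"
    then have m: "m \<ge> 1" "asd_le (cm_states m) (cm_parts m) S P" by auto
    have "\<exists>\<pi>\<in>P. m \<le> card \<pi>"
      by (rule M_sub[OF _ m(2)]) (use pa partition_onD1 in blast)
    then show "m \<in> {1..N}" using ge m(1) by fastforce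
  next
    fix m assume "m \<in> {1..N}"
    then show "m \<in> {m. m \<ge> 1 \<and> asd_le (cm_states m) (cm_parts m) S P}"
      using M_sup[OF p0(1)] pa[OF p0(1)] p0(2) by auto
  qed
  show "capacity S P = log 2 (real (Max (card ` P)))"
    unfolding capacity_def M N_def[symmetric]
  proof (rule Max_eqI)
    show "finite ((\<lambda>m. log 2 (real m)) ` {1..N})" by simp
    show "y \<le> log 2 (real N)" if "y \<in> (\<lambda>m. log 2 (real m)) ` {1..N}" for y
      using that by auto
    show "log 2 (real N) \<in> (\<lambda>m. log 2 (real m)) ` {1..N}" using N1 by auto
  qed
  show "Max ((\<lambda>\<pi>. log 2 (real (card \<pi>))) ` P) = log 2 (real (Max (card ` P)))"
    unfolding N_def[symmetric]
  proof (rule Max_eqI)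
    show "finite ((\<lambda>\<pi>. log 2 (real (card \<pi>))) ` P)" using fP by simp
    show "y \<le> log 2 (real N)" if yy: "y \<in> (\<lambda>\<pi>. log 2 (real (card \<pi>))) ` P" for y
    proof -
      obtain \<pi> where pp: "\<pi> \<in> P" "y = log 2 (real (card \<pi>))" using yy by blast
      have a: "card \<pi> \<le> N" using ge[OF pp(1)] .
      have b: "0 < real (card \<pi>)" using c1[OF pp(1)] by simp
      have "0 < real N" using a b by simp
      then show ?thesis using a b pp(2) by simp
    qed
    show "log 2 (real N) \<in> (\<lambda>\<pi>. log 2 (real (card \<pi>))) ` P" using p0 by force
  qed
qed

lemma prod_part_eq: "prod_part \<pi> \<pi>' = (\<lambda>(B, B'). B \<times> B') ` (\<pi> \<times> \<pi>')"
  unfolding prod_part_def by auto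

lemma prod_part_card:
  assumes "{} \<notin> \<pi>" "{} \<notin> \<pi>'" "finite \<pi>" "finite \<pi>'"
  shows "card (prod_part \<pi> \<pi>') = card \<pi> * card \<pi>'"
proof -
  have "inj_on (\<lambda>(B, B'). B \<times> B') (\<pi> \<times> \<pi>')"
    by (rule inj_onI) (use assms in \<open>auto simp: times_eq_iff\<close>)
  then show ?thesis unfolding prod_part_eq by (simp add: card_image card_cartesian_product)
qed

lemma prod_part_partition:
  assumes "partition_on S \<pi>" "partition_on S' \<pi>'"
  shows "partition_on (S \<times> S') (prod_part \<pi> \<pi>')"
proof (rule partition_onI)
  have u: "\<Union>\<pi> = S" "\<Union>\<pi>' = S'" using assms partition_onD1 by blast+
  show "\<Union>(prod_part \<pi> \<pi>') = S \<times> S'" unfolding prod_part_def using u by blast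
  have ne: "{} \<notin> \<pi>" "{} \<notin> \<pi>'" using assms partition_onD3 by blast+
  show "{} \<notin> prod_part \<pi> \<pi>'"
  proof
    assume "{} \<in> prod_part \<pi> \<pi>'"
    then obtain B B' where "{} = B \<times> B'" "B \<in> \<pi>" "B' \<in> \<pi>'" unfolding prod_part_def by blast
    then show False using ne by (metis Times_empty)
  qed
  fix p q assume "p \<in> prod_part \<pi> \<pi>'" "q \<in> prod_part \<pi> \<pi>'" "p \<noteq> q"
  then obtain A A' B B' where pq: "p = A \<times> A'" "q = B \<times> B'" "A \<in> \<pi>" "A' \<in> \<pi>'" "B \<in> \<pi>" "B' \<in> \<pi>'"
    unfolding prod_part_def by blast
  have "A \<noteq> B \<or> A' \<noteq> B'" using pq \<open>p \<noteq> q\<close> by auto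
  then have "A \<inter> B = {} \<or> A' \<inter> B' = {}"
    using pq assms partition_onD2 disjointD by metis
  then show "disjnt p q" using pq unfolding disjnt_def by auto
qed

lemma meet_card: "finite \<pi> \<Longrightarrow> finite \<rho> \<Longrightarrow> finite (meet \<pi> \<rho>) \<and> card (meet \<pi> \<rho>) \<le> card \<pi> * card \<rho>"
proof -
  assume f: "finite \<pi>" "finite \<rho>"
  have sub: "meet \<pi> \<rho> \<subseteq> (\<lambda>(A, B). A \<inter> B) ` (\<pi> \<times> \<rho>)" unfolding meet_def by auto
  have fi: "finite ((\<lambda>(A, B). A \<inter> B) ` (\<pi> \<times> \<rho>))" using f by simp
  have "card (meet \<pi> \<rho>) \<le> card ((\<lambda>(A, B). A \<inter> B) ` (\<pi> \<times> \<rho>))" using card_mono[OF fi sub] .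
  also have "\<dots> \<le> card (\<pi> \<times> \<rho>)" by (rule card_image_le) (use f in simp)
  finally show ?thesis using finite_subset[OF sub fi] by (simp add: card_cartesian_product)
qed

lemma meet_list_props:
  assumes "\<pi>s \<noteq> []" "set \<pi>s \<subseteq> P" "\<And>\<pi>. \<pi> \<in> P \<Longrightarrow> finite \<pi> \<and> S \<subseteq> \<Union>\<pi> \<and> card \<pi> \<le> N"
  shows "finite (meet_list \<pi>s) \<and> S \<subseteq> \<Union>(meet_list \<pi>s) \<and> card (meet_list \<pi>s) \<le> N ^ length \<pi>s"
  using assms(1,2)
proof (induction \<pi>s rule: meet_list.induct)
  case 1 then show ?case by simp
next
  case (2 \<pi>) then show ?case using assms(3) by auto
next
  case (3 \<pi> v va)
  let ?r = "meet_list (v # va)"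
  have IH: "finite ?r \<and> S \<subseteq> \<Union>?r \<and> card ?r \<le> N ^ length (v # va)" using 3 by auto
  have p: "finite \<pi> \<and> S \<subseteq> \<Union>\<pi> \<and> card \<pi> \<le> N" using 3 assms(3) by auto
  have mc: "finite (meet \<pi> ?r) \<and> card (meet \<pi> ?r) \<le> card \<pi> * card ?r" using meet_card p IH by blast
  have cov: "S \<subseteq> \<Union>(meet \<pi> ?r)"
  proof
    fix x assume x: "x \<in> S"
    obtain A where "A \<in> \<pi>" "x \<in> A" using p x by blast
    moreover obtain B where "B \<in> ?r" "x \<in> B" using IH x by blast
    ultimately show "x \<in> \<Union>(meet \<pi> ?r)" unfolding meet_def by blast
  qed
  have "card \<pi> * card ?r \<le> N * N ^ length (v # va)" using p IH mult_le_mono by blast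
  then show ?case using mc cov by simp
qed

lemma one_in:
  assumes "s \<in> S" "q \<in> Q"
  shows "asd_le (cm_states 1) (cm_parts 1) S Q"
  unfolding asd_le_def cm_states_def
proof (intro exI[of _ "\<lambda>_. s"] exI[of _ "\<lambda>_. q"] conjI)
  show "(\<lambda>_. s) \<in> {1..1} \<rightarrow> S" using assms by simp
  show "(\<lambda>_. q) \<in> cm_parts 1 \<rightarrow> Q" using assms by simp
  show "\<forall>\<pi>\<in>cm_parts 1. refines (part_comp q (\<lambda>_. s) {1..1}) \<pi>"
    unfolding cm_parts_def refines_def part_comp_def by auto
qed


theorem proposition3:
  fixes S :: "'a set" and P :: "'a set set set"
    and S' :: "'b set" and P' :: "'b set set set"
    and k :: nat
  assumes "asd S P" and "S \<noteq> {}" and "P \<noteq> {}"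
    and "asd S' P'" and "S' \<noteq> {}" and "P' \<noteq> {}"
  shows "capacity S P = Max ((\<lambda>\<pi>. log 2 (real (card \<pi>))) ` P)
         \<and> capacity (S \<times> S') (prod_parts P P') = capacity S P + capacity S' P'
         \<and> (k \<ge> 1 \<longrightarrow> capacity S (pow_parts P k) \<le> real k * capacity S P)"
proof -
  have fS: "finite S" "finite P" and pa0: "\<And>\<pi>. \<pi> \<in> P \<Longrightarrow> partition_on S \<pi>"
    using assms(1) unfolding asd_def by auto
  have fS': "finite S'" "finite P'" and pa0': "\<And>\<pi>. \<pi> \<in> P' \<Longrightarrow> partition_on S' \<pi>"
    using assms(4) unfolding asd_def by auto
  have pa: "\<And>\<pi>. \<pi> \<in> P \<Longrightarrow> partition_on S \<pi> \<and> finite \<pi>"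
    using pa0 fS finite_elements by blast
  have pa': "\<And>\<pi>. \<pi> \<in> P' \<Longrightarrow> partition_on S' \<pi> \<and> finite \<pi>"
    using pa0' fS' finite_elements by blast
  define N where "N = Max (card ` P)"
  define N' where "N' = Max (card ` P')"
  note c = cap_gen[OF assms(2) fS(2) assms(3) pa, folded N_def]
  note c' = cap_gen[OF assms(5) fS'(2) assms(6) pa', folded N'_def]
  have part1: "capacity S P = Max ((\<lambda>\<pi>. log 2 (real (card \<pi>))) ` P)" using c by simp
  have geN: "card \<pi> \<le> N" if "\<pi> \<in> P" for \<pi> using fS that N_def by simp
  have geN': "card \<pi> \<le> N'" if "\<pi> \<in> P'" for \<pi> using fS' that N'_def by simp
  have pp: "prod_parts P P' = (\<lambda>(\<pi>, \<pi>'). prod_part \<pi> \<pi>') ` (P \<times> P')"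
    unfolding prod_parts_def by auto
  have fpp: "finite (prod_parts P P')" unfolding pp using fS fS' by simp
  have nepp: "prod_parts P P' \<noteq> {}" unfolding pp using assms(3,6) by auto
  have papp: "partition_on (S \<times> S') \<rho> \<and> finite \<rho>" if rr: "\<rho> \<in> prod_parts P P'" for \<rho>
  proof -
    obtain \<pi> \<pi>' where "\<rho> = prod_part \<pi> \<pi>'" "\<pi> \<in> P" "\<pi>' \<in> P'" using rr unfolding prod_parts_def by blast
    moreover have "partition_on (S \<times> S') (prod_part \<pi> \<pi>')"
      using prod_part_partition pa pa' calculation(2,3) by blast
    moreover have "finite (S \<times> S')" using fS fS' by simp
    ultimately show ?thesis using finite_elements by blast
  qed
  have cpp: "capacity (S \<times> S') (prod_parts P P') = log 2 (real (Max (card ` prod_parts P P')))"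
    using cap_gen(1)[of "S \<times> S'", OF _ fpp nepp papp] assms(2,5) by blast
  have "Max (card ` prod_parts P P') = N * N'"
  proof (rule Max_eqI)
    show "finite (card ` prod_parts P P')" using fpp by simp
    show "y \<le> N * N'" if yy: "y \<in> card ` prod_parts P P'" for y
    proof -
      obtain \<pi> \<pi>' where "y = card (prod_part \<pi> \<pi>')" "\<pi> \<in> P" "\<pi>' \<in> P'"
        using yy unfolding prod_parts_def by blast
      moreover have "card (prod_part \<pi> \<pi>') = card \<pi> * card \<pi>'"
        by (rule prod_part_card) (use pa[OF calculation(2)] pa'[OF calculation(3)] partition_onD3 in blast)+
      moreover have "card \<pi> * card \<pi>' \<le> N * N'"
        using geN[OF calculation(2)] geN'[OF calculation(3)] by (rule mult_le_mono)
      ultimately show ?thesis by simp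
    qed
    have "N \<in> card ` P" unfolding N_def by (rule Max_in) (use fS assms(3) in auto)
    then obtain \<pi> where p: "\<pi> \<in> P" "card \<pi> = N" by auto
    have "N' \<in> card ` P'" unfolding N'_def by (rule Max_in) (use fS' assms(6) in auto)
    then obtain \<pi>' where p': "\<pi>' \<in> P'" "card \<pi>' = N'" by auto
    have "card (prod_part \<pi> \<pi>') = N * N'"
    proof -
      have "card (prod_part \<pi> \<pi>') = card \<pi> * card \<pi>'"
        by (rule prod_part_card) (use pa[OF p(1)] pa'[OF p'(1)] partition_onD3 in blast)+
      then show ?thesis using p(2) p'(2) by simp
    qed
    moreover have "prod_part \<pi> \<pi>' \<in> prod_parts P P'" using p p' unfolding prod_parts_def by blast
    ultimately show "N * N' \<in> card ` prod_parts P P'" by force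
  qed
  then have part2: "capacity (S \<times> S') (prod_parts P P') = capacity S P + capacity S' P'"
    using cpp c(1) c'(1) c(3) c'(3) by (simp add: log_mult)
  have part3: "capacity S (pow_parts P k) \<le> real k * capacity S P" if k: "k \<ge> 1"
  proof -
    have prp: "\<And>\<pi>. \<pi> \<in> P \<Longrightarrow> finite \<pi> \<and> S \<subseteq> \<Union>\<pi> \<and> card \<pi> \<le> N"
      using pa partition_onD1 geN by blast
    have pw: "finite \<rho> \<and> S \<subseteq> \<Union>\<rho> \<and> card \<rho> \<le> N ^ k" if rr: "\<rho> \<in> pow_parts P k" for \<rho>
    proof -
      obtain \<pi>s where "\<rho> = meet_list \<pi>s" "length \<pi>s = k" "set \<pi>s \<subseteq> P"
        using rr unfolding pow_parts_def by blast
      then show ?thesis using meet_list_props[OF _ _ prp, of \<pi>s] k by fastforce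
    qed
    define M where "M = {m. m \<ge> 1 \<and> asd_le (cm_states m) (cm_parts m) S (pow_parts P k)}"
    have Msub: "M \<subseteq> {1..N ^ k}"
    proof
      fix m assume "m \<in> M"
      then have m: "m \<ge> 1" "asd_le (cm_states m) (cm_parts m) S (pow_parts P k)" unfolding M_def by auto
      have "\<exists>\<rho>\<in>pow_parts P k. m \<le> card \<rho>" by (rule M_sub[OF _ m(2)]) (use pw in blast)
      then show "m \<in> {1..N ^ k}" using pw m(1) by fastforce
    qed
    obtain \<pi>0 where "\<pi>0 \<in> P" using assms(3) by blast
    then have mr: "meet_list (replicate k \<pi>0) \<in> pow_parts P k" unfolding pow_parts_def by force
    obtain s where s: "s \<in> S" using assms(2) by blast
    have "asd_le (cm_states 1) (cm_parts 1) S (pow_parts P k)" by (rule one_in[OF s mr])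
    then have "1 \<in> M" unfolding M_def by simp
    have "capacity S (pow_parts P k) = Max ((\<lambda>m. log 2 (real m)) ` M)"
      unfolding capacity_def M_def ..
    also have "\<dots> \<le> log 2 (real (N ^ k))"
    proof (subst Max_le_iff)
      show "finite ((\<lambda>m. log 2 (real m)) ` M)" using Msub finite_subset by (metis finite_atLeastAtMost finite_imageI)
      show "(\<lambda>m. log 2 (real m)) ` M \<noteq> {}" using \<open>1 \<in> M\<close> by blast
      show "\<forall>a\<in>(\<lambda>m. log 2 (real m)) ` M. a \<le> log 2 (real (N ^ k))"
      proof
        fix a assume "a \<in> (\<lambda>m. log 2 (real m)) ` M"
        then obtain m where mm: "m \<in> M" "a = log 2 (real m)" by blast
        have "m \<in> {1..N ^ k}" using Msub mm(1) by blast
        then have m1: "1 \<le> m" "m \<le> N ^ k" by auto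
        have p1: "(0::real) < real m" using m1 by simp
        have p2: "(0::real) < real (N ^ k)" using m1 by linarith
        have "real m \<le> real (N ^ k)" using m1(2) by (rule of_nat_mono)
        then show "a \<le> log 2 (real (N ^ k))" using mm(2) log_le_cancel_iff[of 2, OF _ p1 p2] by simp
      qed
    qed
    also have "\<dots> = real k * log 2 (real N)" by (simp add: log_nat_power)
    finally show ?thesis using c(1) by simp
  qed
  show ?thesis using part1 part2 part3 by blast
qed

end
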